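(* Let $\mathcal{I}\subseteq\mathcal{M}_m$ be decreasing, $r=\max_{u\in\mathcal{I}}\deg u$, and $f,g\in\mathcal{I}_r$ with $h=\gcd(f,g)$ and $\deg(h)\le r-2$. Then $$\Bigl|\mathrm{LTA}(m,2)_h\cdot h\cdot\Bigl(\mathrm{LTA}(m,2)_f\cdot\tfrac fh+\mathrm{LTA}(m,2)_g\cdot\tfrac gh\Bigr)\Bigr|=\bigl|\mathrm{LTA}(m,2)_h\cdot h\bigr|\cdot\Bigl|\mathrm{LTA}(m,2)_f\cdot\tfrac fh+\mathrm{LTA}(m,2)_g\cdot\tfrac gh\Bigr|.$$
   Context: $\mathcal{M}_m$: square-free monomials in $x_0,\dots,x_{m-1}$ in $\mathbf{R}_m=\mathbb{F}_2[x_0,\dots,x_{m-1}]/(x_i^2-x_i)$; $\operatorname{ind}(u)$ the variable indices, $\deg u=|\operatorname{ind}u|$, $\gcd$ has index set the intersection. For equal-degree monomials with increasing indices, $u\preceq_{sh}v$ iff componentwise $\le$; $u\preceq v$ iff $u\preceq_{sh}v^*\mid v$ for some $v^*$; $\mathcal{I}$ decreasing if $f\in\mathcal{I}$, $g\preceq f\Rightarrow g\in\mathcal{I}$; $\mathcal{I}_r$ its degree-$r$ elements. $\mathrm{LTA}(m,2)$: pairs $(\mathbf{B},\varepsilon)$, $\mathbf{B}=(b_{i,j})$ binary lower unitriangular, $\varepsilon\in\mathbb{F}_2^m$, acting on a monomial $u$ by $x_i\mapsto x_i+\sum_{j<i}b_{i,j}x_j+\varepsilon_i$ for $i\in\operatorname{ind}u$.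 $\mathrm{LTA}(m,2)_g$: subgroup with $\varepsilon_i=0$ for $i\notin\operatorname{ind}g$ and $b_{i,j}=0$ if $i\notin\operatorname{ind}g$ or $j\in\operatorname{ind}g$; for $u\mid g$, $\mathrm{LTA}(m,2)_g\cdot u=\{(\mathbf{B},\varepsilon)\cdot u:(\mathbf{B},\varepsilon)\in\mathrm{LTA}(m,2)_g\}$. For sets of polynomials $A+B=\{a+b\}$, $A\cdot B=\{ab\}$. *)

theory Defs
  imports Main
begin

text \<open>Elements of R_m = F_2[x_0..x_{m-1}]/(x_i^2 - x_i) are represented in the
  square-free monomial basis: a polynomial is the (finite) set of square-free
  monomials occurring with coefficient 1, and a square-free monomial is
  identified with its index set ind(u), a finite subset of {..<m}.\<close>

type_synonym monom = "nat set"
type_synonym rpoly = "nat set set"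

definition monomials :: "nat \<Rightarrow> monom set" where
  "monomials m = {u. u \<subseteq> {..<m}}"

definition padd :: "rpoly \<Rightarrow> rpoly \<Rightarrow> rpoly" where
  "padd p q = (p - q) \<union> (q - p)"

definition pmul :: "rpoly \<Rightarrow> rpoly \<Rightarrow> rpoly" where
  "pmul p q = {w. odd (card {(a, b). a \<in> p \<and> b \<in> q \<and> a \<union> b = w})}"

definition deg :: "monom \<Rightarrow> nat" where
  "deg u = card u"

definition sh_le :: "monom \<Rightarrow> monom \<Rightarrow> bool" where
  "sh_le u v \<longleftrightarrow> card u = card v \<and>
     (\<forall>k < card u. sorted_list_of_set u ! k \<le> sorted_list_of_set v ! k)"

definition mon_le :: "monom \<Rightarrow> monom \<Rightarrow> bool" where
  "mon_le u v \<longleftrightarrow> (\<exists>v'. v' \<subseteq> v \<and> sh_le u v')"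

definition decreasing :: "nat \<Rightarrow> monom set \<Rightarrow> bool" where
  "decreasing m I \<longleftrightarrow> I \<subseteq> monomials m \<and>
     (\<forall>f \<in> I. \<forall>g \<in> monomials m. mon_le g f \<longrightarrow> g \<in> I)"

text \<open>LTA(m,2): B is encoded by its strictly-lower entries b i j (j < i < m);
  the diagonal is implicitly 1 and entries above it 0.\<close>
definition LTA :: "nat \<Rightarrow> ((nat \<Rightarrow> nat \<Rightarrow> bool) \<times> (nat \<Rightarrow> bool)) set" where
  "LTA m = {(B, e). (\<forall>i j. B i j \<longrightarrow> j < i \<and> i < m) \<and> (\<forall>i. e i \<longrightarrow> i < m)}"

definition LTA_sub :: "nat \<Rightarrow> monom \<Rightarrow> ((nat \<Rightarrow> nat \<Rightarrow> bool) \<times> (nat \<Rightarrow> bool)) set" where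
  "LTA_sub m g = {(B, e) \<in> LTA m. (\<forall>i. i \<notin> g \<longrightarrow> \<not> e i) \<and>
                    (\<forall>i j. (i \<notin> g \<or> j \<in> g) \<longrightarrow> \<not> B i j)}"

text \<open>Image of x_i: x_i + sum_{j<i} b_{i,j} x_j + e_i.\<close>
definition lin :: "(nat \<Rightarrow> nat \<Rightarrow> bool) \<Rightarrow> (nat \<Rightarrow> bool) \<Rightarrow> nat \<Rightarrow> rpoly" where
  "lin B e i = insert {i} ({{j} | j. j < i \<and> B i j} \<union> (if e i then {{}} else {}))"

definition act :: "(nat \<Rightarrow> nat \<Rightarrow> bool) \<times> (nat \<Rightarrow> bool) \<Rightarrow> monom \<Rightarrow> rpoly" where
  "act \<sigma> u = foldr pmul (map (lin (fst \<sigma>) (snd \<sigma>)) (sorted_list_of_set u)) {{}}"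

definition orbit :: "nat \<Rightarrow> monom \<Rightarrow> monom \<Rightarrow> rpoly set" where
  "orbit m g u = {act \<sigma> u | \<sigma>. \<sigma> \<in> LTA_sub m g}"

definition set_add :: "rpoly set \<Rightarrow> rpoly set \<Rightarrow> rpoly set" where
  "set_add A B = {padd a b | a b. a \<in> A \<and> b \<in> B}"

definition set_mul :: "rpoly set \<Rightarrow> rpoly set \<Rightarrow> rpoly set" where
  "set_mul A B = {pmul a b | a b. a \<in> A \<and> b \<in> B}"

end

theory Submission imports Defs begin

definition ev :: "rpoly \<Rightarrow> nat set \<Rightarrow> bool" where
  "ev p x = odd (card {w\<in>p. w \<subseteq> x})"

lemma odd_symdiff:
  assumes "finite P" "finite Q"
  shows "odd (card ((P - Q) \<union> (Q - P))) = (odd (card P) \<noteq> odd (card Q))"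
proof -
  have d: "card ((P - Q) \<union> (Q - P)) = card (P - Q) + card (Q - P)"
    using assms by (intro card_Un_disjoint) auto
  have "card (P - Q) + card (P \<inter> Q) = card P"
    using assms by (metis card_Diff_subset_Int card_mono finite_Int inf_le1 le_add_diff_inverse2
         Int_commute card_Int_Diff)
  moreover have "card (Q - P) + card (P \<inter> Q) = card Q"
    using assms by (metis Int_commute card_Int_Diff finite_Int add.commute card_Diff_subset_Int)
  ultimately show ?thesis using d by presburger
qed

lemma finite_padd: "finite p \<Longrightarrow> finite q \<Longrightarrow> finite (padd p q)"
  by (simp add: padd_def)

lemma ev_padd: "finite p \<Longrightarrow> finite q \<Longrightarrow> ev (padd p q) x = (ev p x \<noteq> ev q x)"
proof -
  assume a: "finite p" "finite q"
  have "{w\<in>padd p q. w \<subseteq> x} = ({w\<in>p. w\<subseteq>x} - {w\<in>q. w\<subseteq>x}) \<union> ({w\<in>q. w\<subseteq>x} - {w\<in>p. w\<subseteq>x})"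
    by (auto simp: padd_def)
  then show ?thesis unfolding ev_def using odd_symdiff[of "{w\<in>p. w\<subseteq>x}" "{w\<in>q. w\<subseteq>x}"] a by simp
qed

lemma finite_pmul: assumes "finite p" "finite q" shows "finite (pmul p q)"
proof -
  have "pmul p q \<subseteq> (\<lambda>(a,b). a \<union> b) ` (p \<times> q)"
  proof
    fix w assume "w \<in> pmul p q"
    then have "card {(a, b). a \<in> p \<and> b \<in> q \<and> a \<union> b = w} \<noteq> 0" by (auto simp: pmul_def elim: oddE)
    then have "{(a, b). a \<in> p \<and> b \<in> q \<and> a \<union> b = w} \<noteq> {}" by (metis card.empty)
    then obtain a b where "a \<in> p" "b \<in> q" "a \<union> b = w" by blast
    then show "w \<in> (\<lambda>(a,b). a \<union> b) ` (p \<times> q)" by force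
  qed
  then show ?thesis using assms finite_subset by blast
qed

lemma parity_sum: "finite W \<Longrightarrow> odd (sum n W) = odd (card {w\<in>W. odd (n w :: nat)})"
proof (induction W rule: finite_induct)
  case empty then show ?case by simp
next
  case (insert a W)
  have "{w\<in>insert a W. odd (n w)} = (if odd (n a) then insert a {w\<in>W. odd (n w)} else {w\<in>W. odd (n w)})"
    by auto
  then show ?case using insert by auto
qed

lemma ev_pmul: assumes "finite p" "finite q" shows "ev (pmul p q) x = (ev p x \<and> ev q x)"
proof -
  define P where "P = {a\<in>p. a \<subseteq> x}"
  define Q where "Q = {b\<in>q. b \<subseteq> x}"
  define N where "N w = {(a, b). a \<in> p \<and> b \<in> q \<and> a \<union> b = w}" for w
  define W where "W = (\<lambda>(a,b). a \<union> b) ` (P \<times> Q)"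
  have fPQ: "finite P" "finite Q" using assms by (auto simp: P_def Q_def)
  have fW: "finite W" using fPQ by (simp add: W_def)
  have Nsub: "N w \<subseteq> P \<times> Q" if "w \<in> W" for w
    using that by (auto simp: N_def W_def P_def Q_def)
  have e1: "{w\<in>pmul p q. w \<subseteq> x} = {w\<in>W. odd (card (N w))}"
  proof
    show "{w\<in>pmul p q. w \<subseteq> x} \<subseteq> {w\<in>W. odd (card (N w))}"
    proof
      fix w assume w: "w \<in> {w\<in>pmul p q. w \<subseteq> x}"
      then have o: "odd (card (N w))" by (simp add: pmul_def N_def)
      then have "N w \<noteq> {}" by auto
      then obtain a b where "a \<in> p" "b \<in> q" "a \<union> b = w" by (auto simp: N_def)
      then have "w \<in> W" using w by (auto simp: W_def P_def Q_def)
      then show "w \<in> {w\<in>W. odd (card (N w))}" using o by simp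
    qed
    show "{w\<in>W. odd (card (N w))} \<subseteq> {w\<in>pmul p q. w \<subseteq> x}"
      by (auto simp: W_def P_def Q_def pmul_def N_def)
  qed
  have un: "P \<times> Q = (\<Union>w\<in>W. N w)"
    by (auto simp: W_def N_def P_def Q_def)
  have "card (P \<times> Q) = (\<Sum>w\<in>W. card (N w))"
    unfolding un
  proof (rule card_UN_disjoint[OF fW])
    show "\<forall>w\<in>W. finite (N w)" using Nsub fPQ by (meson finite_SigmaI finite_subset)
    show "\<forall>i\<in>W. \<forall>j\<in>W. i \<noteq> j \<longrightarrow> N i \<inter> N j = {}" by (auto simp: N_def)
  qed
  then have "odd (card P * card Q) = odd (card {w\<in>W. odd (card (N w))})"
    using parity_sum[OF fW] by (simp add: card_cartesian_product)
  then show ?thesis unfolding ev_def e1 by (simp add: P_def Q_def)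
qed

lemma ev_inj:
  assumes "finite p" "finite q" "\<And>x. ev p x = ev q x" shows "p = q"
proof (rule ccontr)
  assume "p \<noteq> q"
  define d where "d = padd p q"
  have fd: "finite d" using assms by (simp add: d_def finite_padd)
  have "d \<noteq> {}" using \<open>p \<noteq> q\<close> by (auto simp: d_def padd_def)
  then obtain w where w: "w \<in> d" "\<And>v. v \<in> d \<Longrightarrow> v \<subseteq> w \<Longrightarrow> v = w"
    using finite_has_minimal[OF fd] by (metis order_le_less)
  have "{v\<in>d. v \<subseteq> w} = {w}" using w by auto
  then have "ev d w" by (simp add: ev_def)
  moreover have "\<not> ev d w" using assms by (simp add: d_def ev_padd)
  ultimately show False by simp
qed


definition phi :: "(nat \<Rightarrow> nat \<Rightarrow> bool) \<times> (nat \<Rightarrow> bool) \<Rightarrow> nat \<Rightarrow> nat set \<Rightarrow> bool" where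
  "phi \<sigma> i x = (odd (card {j. j < i \<and> fst \<sigma> i j \<and> j \<in> x}) \<noteq> snd \<sigma> i)"

lemma finite_lin: "finite (lin B e i)"
proof -
  have "{{j} | j. j < i \<and> B i j} = (\<lambda>j. {j}) ` {j. j < i \<and> B i j}" by auto
  then show ?thesis by (simp add: lin_def)
qed

lemma ev_lin: "ev (lin B e i) x = ((i \<in> x) \<noteq> (odd (card {j. j < i \<and> B i j \<and> j \<in> x}) \<noteq> e i))"
proof -
  define J where "J = {j. j < i \<and> B i j \<and> j \<in> x}"
  have fJ: "finite J" by (simp add: J_def)
  have eq: "{w\<in>lin B e i. w \<subseteq> x} = ((if i \<in> x then {{i}} else {}) \<union> (if e i then {{}} else {})) \<union> (\<lambda>j. {j}) ` J"
    by (auto simp: lin_def J_def)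
  have c1: "card (((if i \<in> x then {{i}} else {}) \<union> (if e i then {{}} else {})) \<union> (\<lambda>j. {j}) ` J)
     = card ((if i \<in> x then {{i}} else {}) \<union> (if e i then {{}} else {})) + card ((\<lambda>j. {j}) ` J)"
    by (rule card_Un_disjoint) (auto simp: fJ J_def)
  have c2: "card ((if i \<in> x then {{i}} else {}) \<union> (if e i then {{}} else {})) = (if i \<in> x then 1 else 0) + (if e i then 1 else 0)"
    by auto
  have c3: "card ((\<lambda>j. {j}) ` J) = card J" by (simp add: card_image)
  show ?thesis unfolding ev_def eq c1 c2 c3 J_def[symmetric] by auto
qed

lemma ev_foldr:
  assumes "\<forall>i\<in>set l. finite (F i)"
  shows "finite (foldr pmul (map F l) {{}}) \<and> ev (foldr pmul (map F l) {{}}) x = (\<forall>i\<in>set l. ev (F i) x)"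
  using assms
proof (induction l)
  case Nil
  have "{w. w = {} \<and> w \<subseteq> x} = {{}}" by auto
  then show ?case by (simp add: ev_def)
next
  case (Cons a l) then show ?case by (simp add: finite_pmul ev_pmul)
qed

lemma act_props:
  assumes "finite u"
  shows "finite (act \<sigma> u)" "ev (act \<sigma> u) x = (\<forall>i\<in>u. (i \<in> x) \<noteq> phi \<sigma> i x)"
  using ev_foldr[of "sorted_list_of_set u" "lin (fst \<sigma>) (snd \<sigma>)" x] assms
  by (auto simp: act_def finite_lin ev_lin phi_def)

lemma pivot:
  fixes T :: "nat set"
  assumes "finite T"
    and "\<And>i x y. x \<inter> {..<i} = y \<inter> {..<i} \<Longrightarrow> \<rho> i x = \<rho> i y"
  shows "\<exists>x. \<forall>i\<in>T. (i \<in> x) = \<rho> i x"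
proof -
  have "\<exists>x. x \<subseteq> {..<n} \<and> (\<forall>i\<in>T \<inter> {..<n}. (i \<in> x) = \<rho> i x)" for n :: nat
  proof (induction n)
    case 0 then show ?case by simp
  next
    case (Suc n)
    then obtain x where x: "x \<subseteq> {..<n}" "\<forall>i\<in>T \<inter> {..<n}. (i \<in> x) = \<rho> i x" by blast
    define x' where "x' = (if n \<in> T \<and> \<rho> n x then insert n x else x)"
    have "x' \<subseteq> {..<Suc n}" using x by (auto simp: x'_def)
    moreover have "(i \<in> x') = \<rho> i x'" if "i \<in> T \<inter> {..<Suc n}" for i
    proof (cases "i = n")
      case True
      have "x' \<inter> {..<i} = x \<inter> {..<i}" using True by (auto simp: x'_def)
      then have "\<rho> i x' = \<rho> i x" using assms(2) that by blast
      then show ?thesis using True x(1) that by (auto simp: x'_def)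
    next
      case False
      then have i: "i < n" using that by auto
      have "x' \<inter> {..<i} = x \<inter> {..<i}" using i by (auto simp: x'_def)
      then have "\<rho> i x' = \<rho> i x" using assms(2) that by blast
      moreover have "(i \<in> x') = (i \<in> x)" using i by (auto simp: x'_def)
      ultimately show ?thesis using x(2) i that by auto
    qed
    ultimately show ?case by blast
  qed
  moreover obtain n where "T \<subseteq> {..<n}" using assms(1) by (auto simp: finite_nat_set_iff_bounded)
  ultimately show ?thesis by (metis inf.absorb1)
qed


lemma half:
  fixes F G D :: "nat set" and \<phi>F \<phi>G :: "nat \<Rightarrow> nat set \<Rightarrow> bool" and c :: bool
  assumes fF: "finite F" and fG: "finite G" and fD: "finite D" and dis: "F \<inter> G = {}"
    and cG: "card G \<ge> 2"
    and lowF: "\<And>i x y. x \<inter> {..<i} = y \<inter> {..<i} \<Longrightarrow> \<phi>F i x = \<phi>F i y"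
    and lowG: "\<And>i x y. x \<inter> {..<i} = y \<inter> {..<i} \<Longrightarrow> \<phi>G i x = \<phi>G i y"
    and nz: "D \<noteq> {} \<or> c" and mx: "D = {} \<or> Max D \<notin> F"
  shows "\<exists>x. (\<forall>i\<in>F. (i \<in> x) \<noteq> \<phi>F i x) \<and> \<not> (\<forall>i\<in>G. (i \<in> x) \<noteq> \<phi>G i x) \<and> (odd (card (D \<inter> x)) \<noteq> c)"
proof (cases "D = {}")
  case True
  then have c using nz by simp
  have "G \<noteq> {}" using cG by (metis card.empty not_numeral_le_zero)
  then obtain t where t: "t \<in> G" by blast
  have tF: "t \<notin> F" using t dis by auto
  define \<rho> where "\<rho> i x = (if i = t then \<phi>G t x else \<not> \<phi>F i x)" for i x
  have low: "\<rho> i x = \<rho> i y" if "x \<inter> {..<i} = y \<inter> {..<i}" for i x y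
    using lowF[OF that] lowG[OF that] by (cases "i = t") (simp_all add: \<rho>_def)
  have "finite (insert t F)" using fF by simp
  from pivot[where \<rho>=\<rho>, OF this low] obtain x where x: "\<forall>i\<in>insert t F. (i \<in> x) = \<rho> i x" by blast
  have "\<forall>i\<in>F. (i \<in> x) \<noteq> \<phi>F i x" using x tF by (auto simp: \<rho>_def)
  moreover have "\<not> (\<forall>i\<in>G. (i \<in> x) \<noteq> \<phi>G i x)" using x t by (auto simp: \<rho>_def)
  ultimately show ?thesis using True \<open>c\<close> by auto
next
  case False
  define d where "d = Max D"
  have dD: "d \<in> D" using False fD by (simp add: d_def)
  have dlt: "j < d" if "j \<in> D - {d}" for j using that Max_ge[OF fD, of j] d_def by fastforce
  have dF: "d \<notin> F" using mx False d_def by simp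
  have "G - {d} \<noteq> {}"
  proof
    assume "G - {d} = {}"
    then have "G \<subseteq> {d}" by auto
    then have "card G \<le> card {d}" by (intro card_mono) auto
    then have "card G \<le> 1" by simp
    then show False using cG by simp
  qed
  then obtain t where t: "t \<in> G" "t \<noteq> d" by auto
  have tF: "t \<notin> F" using t dis by auto
  define \<rho> where "\<rho> i x = (if i = d then (odd (card ((D - {d}) \<inter> x)) = c)
       else if i = t then \<phi>G t x else \<not> \<phi>F i x)" for i x
  have lowd: "odd (card ((D - {d}) \<inter> x)) = odd (card ((D - {d}) \<inter> y))" if "x \<inter> {..<d} = y \<inter> {..<d}" for x y
  proof -
    have "(D - {d}) \<inter> x = (D - {d}) \<inter> y" using that dlt by blast
    then show ?thesis by simp
  qed
  have low: "\<rho> i x = \<rho> i y" if "x \<inter> {..<i} = y \<inter> {..<i}" for i x y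
  proof (cases "i = d")
    case True
    then have "x \<inter> {..<d} = y \<inter> {..<d}" using that by simp
    from lowd[OF this] True show ?thesis by (simp add: \<rho>_def)
  next
    case False then show ?thesis using lowF[OF that] lowG[OF that] by (cases "i = t") (simp_all add: \<rho>_def)
  qed
  have "finite (insert d (insert t F))" using fF by simp
  from pivot[where \<rho>=\<rho>, OF this low] obtain x where x: "\<forall>i\<in>insert d (insert t F). (i \<in> x) = \<rho> i x" by blast
  have "\<forall>i\<in>F. (i \<in> x) \<noteq> \<phi>F i x" using x tF dF by (auto simp: \<rho>_def)
  moreover have "\<not> (\<forall>i\<in>G. (i \<in> x) \<noteq> \<phi>G i x)" using x t by (auto simp: \<rho>_def)
  moreover have "odd (card (D \<inter> x)) \<noteq> c"
  proof -
    have dx: "(d \<in> x) = (odd (card ((D - {d}) \<inter> x)) = c)" using x by (simp add: \<rho>_def)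
    show ?thesis
    proof (cases "d \<in> x")
      case True
      then have "D \<inter> x = insert d ((D - {d}) \<inter> x)" using dD by auto
      moreover have "card (insert d ((D - {d}) \<inter> x)) = Suc (card ((D - {d}) \<inter> x))"
        using fD by simp
      ultimately show ?thesis using True dx by simp
    next
      case False
      then have "D \<inter> x = (D - {d}) \<inter> x" by auto
      then show ?thesis using False dx by simp
    qed
  qed
  ultimately show ?thesis by blast
qed

lemma key:
  fixes F G D :: "nat set" and \<phi>F \<phi>G :: "nat \<Rightarrow> nat set \<Rightarrow> bool" and c :: bool
  assumes fF: "finite F" and fG: "finite G" and fD: "finite D" and dis: "F \<inter> G = {}"
    and cF: "card F \<ge> 2" and cG: "card G \<ge> 2"
    and lowF: "\<And>i x y. x \<inter> {..<i} = y \<inter> {..<i} \<Longrightarrow> \<phi>F i x = \<phi>F i y"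
    and lowG: "\<And>i x y. x \<inter> {..<i} = y \<inter> {..<i} \<Longrightarrow> \<phi>G i x = \<phi>G i y"
    and nz: "D \<noteq> {} \<or> c"
  shows "\<exists>x. ((\<forall>i\<in>F. (i \<in> x) \<noteq> \<phi>F i x) \<noteq> (\<forall>i\<in>G. (i \<in> x) \<noteq> \<phi>G i x)) \<and> (odd (card (D \<inter> x)) \<noteq> c)"
proof (cases "D = {} \<or> Max D \<notin> F")
  case True
  from half[where \<phi>F=\<phi>F and \<phi>G=\<phi>G, OF fF fG fD dis cG lowF lowG nz True] obtain x where
    "(\<forall>i\<in>F. (i \<in> x) \<noteq> \<phi>F i x)" "\<not> (\<forall>i\<in>G. (i \<in> x) \<noteq> \<phi>G i x)" "(odd (card (D \<inter> x)) \<noteq> c)"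
    by blast
  then show ?thesis by (intro exI[of _ x]) simp
next
  case False
  then have m: "D = {} \<or> Max D \<notin> G" using dis by blast
  have d: "G \<inter> F = {}" using dis by auto
  from half[where \<phi>F=\<phi>G and \<phi>G=\<phi>F, OF fG fF fD d cF lowG lowF nz m] obtain x where
    "(\<forall>i\<in>G. (i \<in> x) \<noteq> \<phi>G i x)" "\<not> (\<forall>i\<in>F. (i \<in> x) \<noteq> \<phi>F i x)" "(odd (card (D \<inter> x)) \<noteq> c)"
    by blast
  then show ?thesis by (intro exI[of _ x]) simp
qed


lemma phi_off:
  assumes "\<sigma> \<in> LTA_sub m u" "v \<subseteq> u"
  shows "phi \<sigma> i x = phi \<sigma> i (x - v)"
proof -
  have "\<And>j. fst \<sigma> i j \<Longrightarrow> j \<notin> u" using assms(1) by (auto simp: LTA_sub_def)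
  then have "{j. j < i \<and> fst \<sigma> i j \<and> j \<in> x} = {j. j < i \<and> fst \<sigma> i j \<and> j \<in> x - v}"
    using assms(2) by auto
  then show ?thesis by (simp add: phi_def)
qed

lemma phi_low: "x \<inter> {..<i} = y \<inter> {..<i} \<Longrightarrow> phi \<sigma> i x = phi \<sigma> i y"
proof -
  assume a: "x \<inter> {..<i} = y \<inter> {..<i}"
  have "{j. j < i \<and> fst \<sigma> i j \<and> j \<in> x} = {j. j < i \<and> fst \<sigma> i j \<and> j \<in> y}"
    using a by blast
  then show ?thesis by (simp add: phi_def)
qed

lemma LTA_B: "\<sigma> \<in> LTA_sub m u \<Longrightarrow> fst \<sigma> i j \<Longrightarrow> j < i"
  by (auto simp: LTA_sub_def LTA_def)

theorem mainTheorem13: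
  fixes m :: nat and I :: "monom set" and f g h :: monom and r :: nat
  assumes "decreasing m I"
    and "r = Max (deg ` I)"
    and "f \<in> I" and "g \<in> I" and "deg f = r" and "deg g = r"
    and "h = f \<inter> g"
    and "deg h + 2 \<le> r"
  shows "card (set_mul (orbit m h h)
                 (set_add (orbit m f (f - h)) (orbit m g (g - h))))
       = card (orbit m h h) * card (set_add (orbit m f (f - h)) (orbit m g (g - h)))"
proof -
  have Isub: "I \<subseteq> monomials m" using assms(1) by (simp add: decreasing_def)
  have fm: "f \<subseteq> {..<m}" "g \<subseteq> {..<m}" using Isub assms(3,4) by (auto simp: monomials_def)
  have ff: "finite f" "finite g" using fm finite_subset by auto
  have hf: "h \<subseteq> f" "h \<subseteq> g" using assms(7) by auto
  have fh: "finite h" using ff hf finite_subset by auto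
  define F where "F = f - h"
  define G where "G = g - h"
  have fF: "finite F" "finite G" using ff by (auto simp: F_def G_def)
  have cF: "card F \<ge> 2" using card_Diff_subset[OF fh hf(1)] assms(5,8) by (simp add: F_def deg_def)
  have cG: "card G \<ge> 2" using card_Diff_subset[OF fh hf(2)] assms(6,8) by (simp add: G_def deg_def)
  have dis: "F \<inter> G = {}" using assms(7) by (auto simp: F_def G_def)
  have Fh: "F \<inter> h = {}" "G \<inter> h = {}" by (auto simp: F_def G_def)
  define A where "A = orbit m h h"
  define S where "S = set_add (orbit m f F) (orbit m g G)"
  have SM: "set_mul A S = (\<lambda>(a,s). pmul a s) ` (A \<times> S)" by (force simp: set_mul_def)
  have inj: "inj_on (\<lambda>(a,s). pmul a s) (A \<times> S)"
  proof (rule inj_onI)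
    fix p q assume p: "p \<in> A \<times> S" and q: "q \<in> A \<times> S"
      and eq: "(\<lambda>(a,s). pmul a s) p = (\<lambda>(a,s). pmul a s) q"
    obtain a s where ps: "p = (a,s)" by (cases p)
    obtain a' s' where qs: "q = (a',s')" by (cases q)
    from p ps obtain \<sigma> where \<sigma>: "\<sigma> \<in> LTA_sub m h" "a = act \<sigma> h" by (auto simp: A_def orbit_def)
    from q qs obtain \<sigma>' where \<sigma>': "\<sigma>' \<in> LTA_sub m h" "a' = act \<sigma>' h" by (auto simp: A_def orbit_def)
    from p ps obtain \<tau> \<rho> where \<tau>: "\<tau> \<in> LTA_sub m f" "\<rho> \<in> LTA_sub m g" "s = padd (act \<tau> F) (act \<rho> G)"
      by (auto simp: S_def set_add_def orbit_def)
    from q qs obtain \<tau>' \<rho>' where \<tau>': "\<tau>' \<in> LTA_sub m f" "\<rho>' \<in> LTA_sub m g" "s' = padd (act \<tau>' F) (act \<rho>' G)"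
      by (auto simp: S_def set_add_def orbit_def)
    have evs: "\<And>x. ev s x = ((\<forall>i\<in>F. (i \<in> x) \<noteq> phi \<tau> i x) \<noteq> (\<forall>i\<in>G. (i \<in> x) \<noteq> phi \<rho> i x))"
      using \<tau>(3) act_props fF by (simp add: ev_padd)
    have evs': "\<And>x. ev s' x = ((\<forall>i\<in>F. (i \<in> x) \<noteq> phi \<tau>' i x) \<noteq> (\<forall>i\<in>G. (i \<in> x) \<noteq> phi \<rho>' i x))"
      using \<tau>'(3) act_props fF by (simp add: ev_padd)
    have fs: "finite s" "finite s'" using \<tau>(3) \<tau>'(3) act_props fF by (simp_all add: finite_padd)
    have eva: "\<And>x. ev a x = (\<forall>i\<in>h. (i \<in> x) \<noteq> phi \<sigma> i x)" using \<sigma>(2) act_props fh by simp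
    have eva': "\<And>x. ev a' x = (\<forall>i\<in>h. (i \<in> x) \<noteq> phi \<sigma>' i x)" using \<sigma>'(2) act_props fh by simp
    have fa: "finite a" "finite a'" using \<sigma>(2) \<sigma>'(2) act_props fh by simp_all
    have eq2: "(ev a x \<and> ev s x) = (ev a' x \<and> ev s' x)" for x
    proof -
      have "pmul a s = pmul a' s'" using eq ps qs by simp
      then have "ev (pmul a s) x = ev (pmul a' s') x" by simp
      then show ?thesis using fa fs by (simp add: ev_pmul)
    qed
    have offs: "ev s x = ev s (x - h)" for x
    proof -
      have "(\<forall>i\<in>F. (i \<in> x) \<noteq> phi \<tau> i x) = (\<forall>i\<in>F. (i \<in> x - h) \<noteq> phi \<tau> i (x - h))"
      proof (rule ball_cong[OF refl])
        fix i assume "i \<in> F" then show "((i \<in> x) \<noteq> phi \<tau> i x) = ((i \<in> x - h) \<noteq> phi \<tau> i (x - h))"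
          using phi_off[OF \<tau>(1) hf(1), of i x] Fh by auto
      qed
      moreover have "(\<forall>i\<in>G. (i \<in> x) \<noteq> phi \<rho> i x) = (\<forall>i\<in>G. (i \<in> x - h) \<noteq> phi \<rho> i (x - h))"
      proof (rule ball_cong[OF refl])
        fix i assume "i \<in> G" then show "((i \<in> x) \<noteq> phi \<rho> i x) = ((i \<in> x - h) \<noteq> phi \<rho> i (x - h))"
          using phi_off[OF \<tau>(2) hf(2), of i x] Fh by auto
      qed
      ultimately show ?thesis unfolding evs by simp
    qed
    have offs': "ev s' x = ev s' (x - h)" for x
    proof -
      have "(\<forall>i\<in>F. (i \<in> x) \<noteq> phi \<tau>' i x) = (\<forall>i\<in>F. (i \<in> x - h) \<noteq> phi \<tau>' i (x - h))"
      proof (rule ball_cong[OF refl])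
        fix i assume "i \<in> F" then show "((i \<in> x) \<noteq> phi \<tau>' i x) = ((i \<in> x - h) \<noteq> phi \<tau>' i (x - h))"
          using phi_off[OF \<tau>'(1) hf(1), of i x] Fh by auto
      qed
      moreover have "(\<forall>i\<in>G. (i \<in> x) \<noteq> phi \<rho>' i x) = (\<forall>i\<in>G. (i \<in> x - h) \<noteq> phi \<rho>' i (x - h))"
      proof (rule ball_cong[OF refl])
        fix i assume "i \<in> G" then show "((i \<in> x) \<noteq> phi \<rho>' i x) = ((i \<in> x - h) \<noteq> phi \<rho>' i (x - h))"
          using phi_off[OF \<tau>'(2) hf(2), of i x] Fh by auto
      qed
      ultimately show ?thesis unfolding evs' by simp
    qed
    have sol: "\<forall>i\<in>h. (i \<in> (y - h) \<union> {i\<in>h. \<not> phi \<mu> i y}) \<noteq> phi \<mu> i ((y - h) \<union> {i\<in>h. \<not> phi \<mu> i y})"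
      and solh: "(y - h) \<union> {i\<in>h. \<not> phi \<mu> i y} - h = y - h"
      if "\<mu> \<in> LTA_sub m h" for \<mu> y
    proof -
      show sh: "(y - h) \<union> {i\<in>h. \<not> phi \<mu> i y} - h = y - h" by auto
      show "\<forall>i\<in>h. (i \<in> (y - h) \<union> {i\<in>h. \<not> phi \<mu> i y}) \<noteq> phi \<mu> i ((y - h) \<union> {i\<in>h. \<not> phi \<mu> i y})"
      proof
        fix i assume i: "i \<in> h"
        have "phi \<mu> i ((y - h) \<union> {i\<in>h. \<not> phi \<mu> i y}) = phi \<mu> i y"
          using phi_off[OF that subset_refl, of i] sh by metis
        then show "(i \<in> (y - h) \<union> {i\<in>h. \<not> phi \<mu> i y}) \<noteq> phi \<mu> i ((y - h) \<union> {i\<in>h. \<not> phi \<mu> i y})"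
          using i by auto
      qed
    qed
    have ss: "ev s x = ev s' x" for x
    proof
      assume e: "ev s x"
      define x' where "x' = (x - h) \<union> {i\<in>h. \<not> phi \<sigma> i x}"
      have "ev s x'" using e offs[of x] offs[of x'] solh[OF \<sigma>(1), of x] by (simp add: x'_def)
      moreover have "ev a x'" using sol[OF \<sigma>(1), of x] eva by (simp add: x'_def)
      ultimately have "ev s' x'" using eq2 by blast
      then show "ev s' x" using offs'[of x] offs'[of x'] solh[OF \<sigma>(1), of x] by (simp add: x'_def)
    next
      assume e: "ev s' x"
      define x' where "x' = (x - h) \<union> {i\<in>h. \<not> phi \<sigma>' i x}"
      have "ev s' x'" using e offs'[of x] offs'[of x'] solh[OF \<sigma>'(1), of x] by (simp add: x'_def)
      moreover have "ev a' x'" using sol[OF \<sigma>'(1), of x] eva' by (simp add: x'_def)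
      ultimately have "ev s x'" using eq2 by blast
      then show "ev s x" using offs[of x] offs[of x'] solh[OF \<sigma>'(1), of x] by (simp add: x'_def)
    qed
    have sseq: "s = s'" using ev_inj[OF fs ss] .
    have phieq: "phi \<sigma> i x = phi \<sigma>' i x" if e: "ev s x" and i: "i \<in> h" for x i
    proof -
      define x' where "x' = (x - h) \<union> {i\<in>h. \<not> phi \<sigma> i x}"
      have "ev s x'" using e offs[of x] offs[of x'] solh[OF \<sigma>(1), of x] by (simp add: x'_def)
      moreover have "ev a x'" using sol[OF \<sigma>(1), of x] eva by (simp add: x'_def)
      ultimately have "ev a' x'" using eq2 by blast
      then have "(i \<in> x') \<noteq> phi \<sigma>' i x'" using eva' i by blast
      moreover have "phi \<sigma>' i x' = phi \<sigma>' i x" using phi_off[OF \<sigma>'(1) subset_refl] solh[OF \<sigma>(1), of x]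
        by (metis x'_def)
      moreover have "(i \<in> x') = (\<not> phi \<sigma> i x)" using i by (auto simp: x'_def)
      ultimately show ?thesis by simp
    qed
    have coef: "fst \<sigma> i = fst \<sigma>' i \<and> snd \<sigma> i = snd \<sigma>' i" if i: "i \<in> h" for i
    proof (rule ccontr)
      assume ne: "\<not> (fst \<sigma> i = fst \<sigma>' i \<and> snd \<sigma> i = snd \<sigma>' i)"
      define Dd where "Dd = {j. j < i \<and> fst \<sigma> i j \<noteq> fst \<sigma>' i j}"
      define c where "c = (snd \<sigma> i \<noteq> snd \<sigma>' i)"
      have fD: "finite Dd" by (simp add: Dd_def)
      have nz: "Dd \<noteq> {} \<or> c"
      proof (rule ccontr)
        assume "\<not> (Dd \<noteq> {} \<or> c)"
        then have "Dd = {}" "\<not> c" by auto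
        then have "fst \<sigma> i j = fst \<sigma>' i j" for j
          using LTA_B[OF \<sigma>(1), of i j] LTA_B[OF \<sigma>'(1), of i j] by (auto simp: Dd_def)
        then show False using ne \<open>\<not> c\<close> by (auto simp: c_def)
      qed
      obtain x where x: "(\<forall>i\<in>F. (i \<in> x) \<noteq> phi \<tau> i x) \<noteq> (\<forall>i\<in>G. (i \<in> x) \<noteq> phi \<rho> i x)"
        "odd (card (Dd \<inter> x)) \<noteq> c"
        using key[where \<phi>F = "phi \<tau>" and \<phi>G = "phi \<rho>", OF fF fD dis cF cG phi_low phi_low nz] by blast
      have "ev s x" using x(1) evs by simp
      then have pe: "phi \<sigma> i x = phi \<sigma>' i x" using phieq i by blast
      define P where "P = {j. j < i \<and> fst \<sigma> i j \<and> j \<in> x}"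
      define Q where "Q = {j. j < i \<and> fst \<sigma>' i j \<and> j \<in> x}"
      have "(P - Q) \<union> (Q - P) = Dd \<inter> x" by (auto simp: P_def Q_def Dd_def)
      moreover have "odd (card ((P - Q) \<union> (Q - P))) = (odd (card P) \<noteq> odd (card Q))"
        by (rule odd_symdiff) (simp_all add: P_def Q_def)
      moreover have "(odd (card P) \<noteq> snd \<sigma> i) = (odd (card Q) \<noteq> snd \<sigma>' i)"
        using pe by (simp add: phi_def P_def Q_def)
      ultimately show False using x(2) by (auto simp: c_def)
    qed
    have "lin (fst \<sigma>) (snd \<sigma>) i = lin (fst \<sigma>') (snd \<sigma>') i" if "i \<in> h" for i
      using coef[OF that] by (simp add: lin_def)
    then have "a = a'" unfolding \<sigma>(2) \<sigma>'(2) act_def using fh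
      by (metis (no_types, lifting) list.map_cong set_sorted_list_of_set)
    then show "p = q" using ps qs sseq by simp
  qed
  have "card (set_mul A S) = card A * card S"
    unfolding SM card_image[OF inj] card_cartesian_product ..
  then show ?thesis by (simp add: A_def S_def F_def G_def)
qed

end
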